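(* Let $m$ be a positive integer and $I=\{m\}$. If $z_0\in\mathbb C$ satisfies $d(I;z_0)=0$, then $|z_0|\le m$ and $\mathrm{Re}(z_0)\ge -1$.
   Context: For a finite set $I$ of positive integers, $d(I;z)$ denotes the descent polynomial: the unique polynomial whose value at each integer $n>\max(I\cup\{0\})$ is the number of permutations $\pi\in\mathfrak S_n$ with $\{j\mid\pi_j>\pi_{j+1}\}=I$, evaluated at a complex number $z$. (For $I=\{m\}$ one has $d(I;z)=\binom{z}{m}-1$, with $\binom{z}{m}=z(z-1)\cdots(z-m+1)/m!$.) *)

theory Defs
  imports "HOL-Analysis.Analysis" "HOL-Computational_Algebra.Polynomial"
begin

definition descent_set :: "nat \<Rightarrow> (nat \<Rightarrow> nat) \<Rightarrow> nat set" where
  "descent_set n \<sigma> = {j. 1 \<le> j \<and> j < n \<and> \<sigma> j > \<sigma> (Suc j)}"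

definition descent_count :: "nat set \<Rightarrow> nat \<Rightarrow> nat" where
  "descent_count I n = card {\<sigma>. \<sigma> permutes {1..n} \<and> descent_set n \<sigma> = I}"

definition descent_poly :: "nat set \<Rightarrow> complex poly" where
  "descent_poly I = (THE p. \<forall>n::nat. n > Max (I \<union> {0}) \<longrightarrow>
                        poly p (of_nat n) = of_nat (descent_count I n))"

end

theory Submission imports Defs "HOL-Combinatorics.Permutations" begin

lemma incr_chain:
  fixes \<sigma> :: "nat \<Rightarrow> nat"
  assumes "\<And>j. a \<le> j \<Longrightarrow> j < b \<Longrightarrow> \<sigma> j < \<sigma> (Suc j)"
  shows "a \<le> i \<Longrightarrow> i < k \<Longrightarrow> k \<le> b \<Longrightarrow> \<sigma> i < \<sigma> k"
proof (induction k)
  case 0 then show ?case by simp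
next
  case (Suc k)
  show ?case
  proof (cases "i = k")
    case True then show ?thesis using assms Suc.prems by simp
  next
    case False
    then have "\<sigma> i < \<sigma> k" using Suc by simp
    also have "\<sigma> k < \<sigma> (Suc k)" using assms Suc.prems by simp
    finally show ?thesis .
  qed
qed

lemma block_sorted:
  fixes \<sigma> :: "nat \<Rightarrow> nat"
  assumes "\<And>j. a \<le> j \<Longrightarrow> j < b \<Longrightarrow> \<sigma> j < \<sigma> (Suc j)"
  shows "map \<sigma> [a..<Suc b] = sorted_list_of_set (\<sigma> ` {a..b})"
proof -
  have "sorted_wrt (<) (map \<sigma> [a..<Suc b])"
    unfolding sorted_wrt_iff_nth_less
  proof (intro allI impI)
    fix i j assume ij: "i < j" "j < length (map \<sigma> [a..<Suc b])"
    then have "j < Suc b - a" by (simp del: upt_Suc)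
    then have "map \<sigma> [a..<Suc b] ! i = \<sigma> (a + i)" "map \<sigma> [a..<Suc b] ! j = \<sigma> (a + j)"
      using ij(1) by (simp_all del: upt_Suc add: nth_upt)
    moreover have "\<sigma> (a + i) < \<sigma> (a + j)"
      by (rule incr_chain[of a b \<sigma>, OF assms]) (use ij \<open>j < Suc b - a\<close> in auto)
    ultimately show "map \<sigma> [a..<Suc b] ! i < map \<sigma> [a..<Suc b] ! j" by simp
  qed
  moreover have "set (map \<sigma> [a..<Suc b]) = \<sigma> ` {a..b}"
    by (simp del: upt_Suc add: atLeastLessThanSuc_atLeastAtMost)
  ultimately show ?thesis
    using strict_sorted_equal[of "map \<sigma> [a..<Suc b]" "sorted_list_of_set (\<sigma> ` {a..b})"]
      sorted_list_of_set.strict_sorted_key_list_of_set[of "\<sigma> ` {a..b}"]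
    by simp
qed

lemma nondesc:
  assumes "\<sigma> permutes {1..n}" "1 \<le> j" "j < n" "j \<notin> descent_set n \<sigma>"
  shows "\<sigma> j < \<sigma> (Suc j)"
proof -
  have "\<sigma> j \<noteq> \<sigma> (Suc j)" using permutes_inj[OF assms(1)] by (metis injD n_not_Suc_n)
  moreover have "\<not> \<sigma> j > \<sigma> (Suc j)" using assms(2-4) by (simp add: descent_set_def)
  ultimately show ?thesis by simp
qed

lemma map_upt_nth: "1 \<le> j \<Longrightarrow> j \<le> n \<Longrightarrow> map \<sigma> [1..<Suc n] ! (j-1) = \<sigma> j"
proof -
  assume "1 \<le> j" "j \<le> n"
  then have "j - 1 < length [1..<Suc n]" by simp
  then have "map \<sigma> [1..<Suc n] ! (j-1) = \<sigma> ([1..<Suc n] ! (j-1))" by (rule nth_map)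
  also have "[1..<Suc n] ! (j-1) = j" using \<open>1 \<le> j\<close> \<open>j \<le> n\<close> by (subst nth_upt) auto
  finally show ?thesis .
qed

definition LL :: "nat \<Rightarrow> nat set \<Rightarrow> nat list" where
  "LL n S = sorted_list_of_set S @ sorted_list_of_set ({1..n} - S)"

lemma determ:
  assumes p: "\<sigma> permutes {1..n}" and d: "descent_set n \<sigma> \<subseteq> {m}" and mn: "m < n"
    and j: "j \<in> {1..n}"
  shows "\<sigma> j = LL n (\<sigma> ` {1..m}) ! (j - 1)"
proof -
  have b1: "map \<sigma> [1..<Suc m] = sorted_list_of_set (\<sigma> ` {1..m})"
    by (rule block_sorted, rule nondesc[OF p]) (use d mn in auto)
  have b2: "map \<sigma> [Suc m..<Suc n] = sorted_list_of_set (\<sigma> ` {Suc m..n})"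
    by (rule block_sorted, rule nondesc[OF p]) (use d mn in auto)
  have im: "\<sigma> ` {Suc m..n} = {1..n} - \<sigma> ` {1..m}"
  proof -
    have "{Suc m..n} = {1..n} - {1..m}" by auto
    then have "\<sigma> ` {Suc m..n} = \<sigma> ` {1..n} - \<sigma> ` {1..m}"
      using permutes_inj[OF p] by (simp add: image_set_diff)
    then show ?thesis using permutes_image[OF p] by simp
  qed
  have "[1..<Suc n] = [1..<Suc m] @ [Suc m..<Suc n]"
    using upt_add_eq_append[of 1 "Suc m" "n - m"] mn by (simp del: upt_Suc)
  then have "map \<sigma> [1..<Suc n] = LL n (\<sigma> ` {1..m})"
    using b1 b2 im by (simp add: LL_def del: upt_Suc)
  moreover have "map \<sigma> [1..<Suc n] ! (j - 1) = \<sigma> j"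
    using j map_upt_nth[of j n \<sigma>] by (simp del: upt_Suc)
  ultimately show ?thesis by simp
qed

lemma ident:
  assumes p: "\<sigma> permutes {1..n}" and d: "descent_set n \<sigma> = {}"
  shows "\<sigma> = id"
proof
  fix j
  show "\<sigma> j = id j"
  proof (cases "j \<in> {1..n}")
    case False then show ?thesis using p by (simp add: permutes_def)
  next
    case True
    have "map \<sigma> [1..<Suc n] = sorted_list_of_set (\<sigma> ` {1..n})"
      by (rule block_sorted) (use nondesc[OF p] d in auto)
    also have "\<dots> = [1..<Suc n]" using permutes_image[OF p]
      by (simp del: upt_Suc add: atLeastLessThanSuc_atLeastAtMost[symmetric])
    finally have "map \<sigma> [1..<Suc n] ! (j - 1) = [1..<Suc n] ! (j - 1)" by simp
    moreover have "map \<sigma> [1..<Suc n] ! (j - 1) = \<sigma> j"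
      using True map_upt_nth[of j n \<sigma>] by (simp del: upt_Suc)
    moreover have "[1..<Suc n] ! (j - 1) = j"
      using True by (simp del: upt_Suc add: nth_upt)
    ultimately show ?thesis by simp
  qed
qed

definition gS :: "nat \<Rightarrow> nat set \<Rightarrow> nat \<Rightarrow> nat" where
  "gS n S = (\<lambda>j. if j \<in> {1..n} then LL n S ! (j - 1) else j)"

lemma LL_props:
  assumes S: "S \<subseteq> {1..n}"
  shows "length (LL n S) = n" "distinct (LL n S)" "set (LL n S) = {1..n}"
proof -
  have fS: "finite S" using S finite_subset by blast
  have "card S + card ({1..n} - S) = n"
    using S fS by (metis card_Diff_subset card_atLeastAtMost diff_Suc_1 le_add_diff_inverse card_mono finite_atLeastAtMost)
  then show "length (LL n S) = n" by (simp add: LL_def)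
  show "distinct (LL n S)" using fS by (simp add: LL_def)
  show "set (LL n S) = {1..n}" using fS S by (auto simp add: LL_def)
qed

lemma gS_perm:
  assumes S: "S \<subseteq> {1..n}"
  shows "gS n S permutes {1..n}"
proof (rule bij_imp_permutes)
  show "\<And>x. x \<notin> {1..n} \<Longrightarrow> gS n S x = x" by (auto simp add: gS_def)
  have inj: "inj_on (gS n S) {1..n}"
  proof (rule inj_onI)
    fix x y assume xy: "x \<in> {1..n}" "y \<in> {1..n}" "gS n S x = gS n S y"
    then have "LL n S ! (x - 1) = LL n S ! (y - 1)" by (simp add: gS_def)
    moreover have "x - 1 < length (LL n S)" "y - 1 < length (LL n S)"
      using xy LL_props[OF S] by auto
    ultimately have "x - 1 = y - 1" using LL_props(2)[OF S] nth_eq_iff_index_eq by blast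
    then show "x = y" using xy by auto
  qed
  have sub: "gS n S ` {1..n} \<subseteq> {1..n}"
  proof
    fix y assume "y \<in> gS n S ` {1..n}"
    then obtain x where x: "x \<in> {1..n}" "y = LL n S ! (x - 1)" by (auto simp add: gS_def)
    then have "x - 1 < length (LL n S)" using LL_props[OF S] by auto
    then have "y \<in> set (LL n S)" using x by simp
    then show "y \<in> {1..n}" using LL_props(3)[OF S] by simp
  qed
  have "card (gS n S ` {1..n}) = card {1..n}" using inj by (simp add: card_image)
  then have "gS n S ` {1..n} = {1..n}" using sub by (simp add: card_subset_eq)
  then show "bij_betw (gS n S) {1..n} {1..n}" using inj by (simp add: bij_betw_def)
qed

lemma gS_desc:
  assumes S: "S \<subseteq> {1..n}" and c: "card S = m"
  shows "descent_set n (gS n S) \<subseteq> {m}"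
proof
  fix j assume j: "j \<in> descent_set n (gS n S)"
  then have j1: "1 \<le> j" "j < n" and gt: "gS n S j > gS n S (Suc j)" by (auto simp add: descent_set_def)
  have fS: "finite S" using S finite_subset by blast
  define xs where "xs = sorted_list_of_set S"
  define ys where "ys = sorted_list_of_set ({1..n} - S)"
  have lx: "length xs = m" using c fS by (simp add: xs_def)
  have LLe: "LL n S = xs @ ys" by (simp add: LL_def xs_def ys_def)
  have lys: "length ys = n - m" using LL_props(1)[OF S] LLe lx by simp
  have sx: "sorted_wrt (<) xs" and sy: "sorted_wrt (<) ys"
    by (simp_all add: xs_def ys_def)
  have g1: "gS n S j = (xs @ ys) ! (j - 1)" and g2: "gS n S (Suc j) = (xs @ ys) ! j"
    using j1 LLe by (auto simp add: gS_def)
  show "j \<in> {m}"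
  proof (rule ccontr)
    assume "j \<notin> {m}"
    then consider "j < m" | "j > m" by force
    then show False
    proof cases
      case 1
      then have "gS n S j = xs ! (j - 1)" "gS n S (Suc j) = xs ! j"
        using g1 g2 lx j1 by (auto simp add: nth_append)
      moreover have "xs ! (j - 1) < xs ! j"
        using sx 1 lx j1 by (simp add: sorted_wrt_iff_nth_less)
      ultimately show False using gt by simp
    next
      case 2
      then have "gS n S j = ys ! (j - 1 - m)" "gS n S (Suc j) = ys ! (j - m)"
        using g1 g2 lx j1 by (auto simp add: nth_append)
      moreover have "ys ! (j - 1 - m) < ys ! (j - m)"
        using sy 2 lys j1 by (simp add: sorted_wrt_iff_nth_less)
      ultimately show False using gt by simp
    qed
  qed
qed

lemma gS_image:
  assumes S: "S \<subseteq> {1..n}" and c: "card S = m"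
  shows "gS n S ` {1..m} = S"
proof -
  have fS: "finite S" using S finite_subset by blast
  have mn: "m \<le> n" using c S by (metis card_atLeastAtMost card_mono diff_Suc_1 finite_atLeastAtMost)
  define xs where "xs = sorted_list_of_set S"
  have lx: "length xs = m" using c fS by (simp add: xs_def)
  have "gS n S ` {1..m} = (\<lambda>k. xs ! k) ` {..<m}"
  proof (rule set_eqI)
    fix y
    show "y \<in> gS n S ` {1..m} \<longleftrightarrow> y \<in> (\<lambda>k. xs ! k) ` {..<m}"
    proof
      assume "y \<in> gS n S ` {1..m}"
      then obtain x where x: "x \<in> {1..m}" "y = gS n S x" by auto
      then have "y = xs ! (x - 1)" using mn lx by (auto simp add: gS_def LL_def xs_def nth_append)
      then show "y \<in> (\<lambda>k. xs ! k) ` {..<m}" using x by auto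
    next
      assume "y \<in> (\<lambda>k. xs ! k) ` {..<m}"
      then obtain k where k: "k < m" "y = xs ! k" by auto
      then have "y = gS n S (Suc k)" using mn lx by (auto simp add: gS_def LL_def xs_def nth_append)
      then show "y \<in> gS n S ` {1..m}" using k by auto
    qed
  qed
  also have "\<dots> = set xs" using lx by (auto simp add: set_conv_nth)
  also have "\<dots> = S" using fS by (simp add: xs_def)
  finally show ?thesis .
qed

lemma desc_id: "descent_set n id = {}"
  by (auto simp add: descent_set_def)

lemma count_single:
  assumes m1: "1 \<le> m" and mn: "m < n"
  shows "descent_count {m} n = (n choose m) - 1"
proof -
  define D0 where "D0 = {\<sigma>. \<sigma> permutes {1..n} \<and> descent_set n \<sigma> \<subseteq> {m}}"
  define Sub where "Sub = {S. S \<subseteq> {1..n} \<and> card S = m}"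
  have bij: "bij_betw (\<lambda>\<sigma>. \<sigma> ` {1..m}) D0 Sub"
  proof (rule bij_betwI[where g = "gS n"])
    show "(\<lambda>\<sigma>. \<sigma> ` {1..m}) \<in> D0 \<rightarrow> Sub"
    proof
      fix \<sigma> assume "\<sigma> \<in> D0"
      then have p: "\<sigma> permutes {1..n}" by (simp add: D0_def)
      have "\<sigma> ` {1..m} \<subseteq> {1..n}" using permutes_image[OF p] mn by auto
      moreover have "card (\<sigma> ` {1..m}) = m"
        using permutes_inj[OF p] by (simp add: card_image inj_on_subset)
      ultimately show "\<sigma> ` {1..m} \<in> Sub" by (simp add: Sub_def)
    qed
    show "gS n \<in> Sub \<rightarrow> D0"
      using gS_perm gS_desc by (auto simp add: Sub_def D0_def)
    show "gS n (\<sigma> ` {1..m}) = \<sigma>" if "\<sigma> \<in> D0" for \<sigma>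
    proof
      fix j
      from that have p: "\<sigma> permutes {1..n}" and d: "descent_set n \<sigma> \<subseteq> {m}" by (auto simp add: D0_def)
      show "gS n (\<sigma> ` {1..m}) j = \<sigma> j"
      proof (cases "j \<in> {1..n}")
        case True
        then show ?thesis using determ[OF p d mn True] by (simp add: gS_def)
      next
        case False
        then show ?thesis using p by (auto simp add: gS_def permutes_def)
      qed
    qed
    show "gS n S ` {1..m} = S" if "S \<in> Sub" for S
      using gS_image that by (simp add: Sub_def)
  qed
  have "card D0 = card Sub" using bij by (rule bij_betw_same_card)
  also have "\<dots> = n choose m" unfolding Sub_def by (subst n_subsets) auto
  finally have cD0: "card D0 = n choose m" .
  have "{\<sigma>. \<sigma> permutes {1..n} \<and> descent_set n \<sigma> = {m}} = D0 - {id}"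
  proof (rule set_eqI)
    fix \<sigma>
    show "\<sigma> \<in> {\<sigma>. \<sigma> permutes {1..n} \<and> descent_set n \<sigma> = {m}} \<longleftrightarrow> \<sigma> \<in> D0 - {id}"
    proof
      assume "\<sigma> \<in> {\<sigma>. \<sigma> permutes {1..n} \<and> descent_set n \<sigma> = {m}}"
      then show "\<sigma> \<in> D0 - {id}" using desc_id by (auto simp add: D0_def)
    next
      assume a: "\<sigma> \<in> D0 - {id}"
      then have p: "\<sigma> permutes {1..n}" and d: "descent_set n \<sigma> \<subseteq> {m}" and ne: "\<sigma> \<noteq> id"
        by (auto simp add: D0_def)
      have "descent_set n \<sigma> \<noteq> {}" using ident[OF p] ne by blast
      then have "descent_set n \<sigma> = {m}" using d by blast
      then show "\<sigma> \<in> {\<sigma>. \<sigma> permutes {1..n} \<and> descent_set n \<sigma> = {m}}" using p by simp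
    qed
  qed
  moreover have "id \<in> D0" by (simp add: D0_def desc_id permutes_id)
  ultimately show ?thesis unfolding descent_count_def using cD0 by (simp add: card_Diff_singleton)
qed


definition PP :: "nat \<Rightarrow> complex poly" where
  "PP m = smult (inverse (fact m)) (\<Prod>k<m. [:- of_nat k, 1:]) - 1"

lemma poly_PP: "poly (PP m) z = (z gchoose m) - 1"
  by (simp add: PP_def poly_prod gbinomial_prod_rev atLeast0LessThan divide_inverse mult.commute)

lemma PP_vals:
  assumes "1 \<le> m" "m < n"
  shows "poly (PP m) (of_nat n) = of_nat (descent_count {m} n)"
proof -
  have "1 \<le> n choose m" using assms by (simp add: Suc_le_eq)
  then have "of_nat (descent_count {m} n) = (of_nat (n choose m) :: complex) - 1"
    using count_single[OF assms] by (simp add: of_nat_diff)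
  then show ?thesis by (simp add: poly_PP binomial_gbinomial)
qed

lemma descent_poly_single:
  assumes "1 \<le> m"
  shows "descent_poly {m} = PP m"
proof -
  have Mx: "Max ({m} \<union> {0}) = m" by simp
  show ?thesis
    unfolding descent_poly_def Mx
  proof (rule the_equality)
    show "\<forall>n. m < n \<longrightarrow> poly (PP m) (of_nat n) = of_nat (descent_count {m} n)"
      using PP_vals[OF assms] by blast
    fix p :: "complex poly" assume p: "\<forall>n. m < n \<longrightarrow> poly p (of_nat n) = of_nat (descent_count {m} n)"
    show "p = PP m"
    proof (rule ccontr)
      assume "p \<noteq> PP m"
      then have "p - PP m \<noteq> 0" by simp
      then have fin: "finite {x. poly (p - PP m) x = 0}" by (rule poly_roots_finite)
      have "(of_nat :: nat \<Rightarrow> complex) ` {Suc m..} \<subseteq> {x. poly (p - PP m) x = 0}"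
        using p PP_vals[OF assms] by auto
      then have "finite ((of_nat :: nat \<Rightarrow> complex) ` {Suc m..})" using fin finite_subset by blast
      then have "finite {Suc m..}"
        by (rule finite_imageD) (simp add: inj_on_def)
      then show False using infinite_Ici[of "Suc m"] by simp
    qed
  qed
qed

lemma roots_bound:
  fixes z0 :: complex
  assumes m1: "1 \<le> m" and r: "(\<Prod>k<m. norm (z0 - of_nat k)) = fact m"
  shows "cmod z0 \<le> of_nat m \<and> Re z0 \<ge> -1"
proof
  have fm: "(fact m :: real) = (\<Prod>k<m. real (Suc k))"
    by (simp add: fact_prod_Suc atLeast0LessThan)
  have m0: "0 \<in> {..<m}" using m1 by simp
  show "cmod z0 \<le> of_nat m"
  proof (rule ccontr)
    assume "\<not> cmod z0 \<le> of_nat m"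
    then have big: "cmod z0 > real m" by simp
    have lt: "real m - real k < norm (z0 - of_nat k)" if "k \<in> {..<m}" for k
    proof -
      have "cmod z0 - real k \<le> norm (z0 - of_nat k)"
        using norm_triangle_ineq2[of z0 "of_nat k"] by simp
      then show ?thesis using big by linarith
    qed
    have "(\<Prod>k<m. real m - real k) < (\<Prod>k<m. norm (z0 - of_nat k))"
    proof (rule prod_mono_strict[where i=0])
      show "0 \<in> {..<m}" by (rule m0)
      show "real m - real 0 < cmod (z0 - of_nat 0)" by (rule lt[OF m0])
      show "finite {..<m}" by simp
      fix i assume i: "i \<in> {..<m}"
      then show "0 \<le> real m - real i \<and> real m - real i \<le> cmod (z0 - of_nat i)"
        using lt[OF i] i by simp
      have "0 < real m - real i" using i by simp
      then show "0 < cmod (z0 - of_nat i)" using lt[OF i] by linarith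
    qed
    moreover have "(\<Prod>k<m. real m - real k) = (\<Prod>k<m. real (Suc (m - Suc k)))"
      by (rule prod.cong) auto
    moreover have "(\<Prod>k<m. real (Suc (m - Suc k))) = (\<Prod>k<m. real (Suc k))"
      by (rule prod.nat_diff_reindex)
    ultimately have "(\<Prod>k<m. real (Suc k)) < (\<Prod>k<m. norm (z0 - of_nat k))" by linarith
    then show False using r fm by linarith
  qed
  show "Re z0 \<ge> -1"
  proof (rule ccontr)
    assume "\<not> Re z0 \<ge> -1"
    then have neg: "Re z0 < -1" by simp
    have lt: "real (Suc k) < norm (z0 - of_nat k)" for k
    proof -
      have "\<bar>Re (z0 - of_nat k)\<bar> \<le> norm (z0 - of_nat k)" by (rule abs_Re_le_cmod)
      then show ?thesis using neg by (simp add: abs_if split: if_splits)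
    qed
    have "(\<Prod>k<m. real (Suc k)) < (\<Prod>k<m. norm (z0 - of_nat k))"
    proof (rule prod_mono_strict[where i=0])
      show "0 \<in> {..<m}" by (rule m0)
      show "real (Suc 0) < cmod (z0 - of_nat 0)" by (rule lt)
      show "finite {..<m}" by simp
      fix i
      show "0 \<le> real (Suc i) \<and> real (Suc i) \<le> cmod (z0 - of_nat i)"
        using lt[of i] by simp
      have "0 < real (Suc i)" by simp
      then show "0 < cmod (z0 - of_nat i)" using lt[of i] by linarith
    qed
    then show False using r fm by linarith
  qed
qed

theorem theorem4p4:
  fixes m :: nat and z0 :: complex
  assumes "m \<ge> 1"
    and "poly (descent_poly {m}) z0 = 0"
  shows "cmod z0 \<le> of_nat m \<and> Re z0 \<ge> -1"
proof -
  have "z0 gchoose m = 1" using assms by (simp add: descent_poly_single poly_PP)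
  then have "(\<Prod>k<m. z0 - of_nat k) / fact m = 1"
    by (simp add: gbinomial_prod_rev atLeast0LessThan)
  then have "(\<Prod>k<m. z0 - of_nat k) = fact m" by (simp add: field_simps)
  then have "norm (\<Prod>k<m. z0 - of_nat k) = norm (fact m :: complex)" by simp
  then have "(\<Prod>k<m. norm (z0 - of_nat k)) = fact m"
    by (simp add: prod_norm norm_fact)
  then show ?thesis using roots_bound[OF assms(1)] by blast
qed

end
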